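(* Consider a batched algorithm with $B$ batches and allocation functions $w_t:((\Delta_{\mathcal X})^K)^{t-1}\to\Delta_K$, $t\in[B]$: in batch $t$ each arm $a$ is pulled exactly $w_t(a)(Q^{t-1})T/B$ times, $Q_{t,a}$ is the empirical distribution of arm $a$'s samples in batch $t$, and after the $T$ samples the algorithm outputs an index $\hat i\in\arg\min_{i\in[m]}\sum_{t=1}^B\sum_{a}w_t(a)(Q^{t-1})D(Q_{t,a}\|\nu^i_a)$ (maximum likelihood, ties broken arbitrarily). Suppose that for every $Q^B=(Q_1,\dots,Q_B)\in((\Delta_{\mathcal X})^K)^B$, $$\max_{j\in[m]}\ \min_{i\ne j}\ \frac1B\sum_{t=1}^B\sum_{a=1}^Kw_t(a)(Q^{t-1})\,D(Q_{t,a}\|\nu^i_a)\ \ge R.$$ Then the minimal error exponent of this algorithm satisfies $e_m\ge R$. *)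

theory Defs
  imports "HOL-Probability.Probability"
begin

text \<open>Setting: finite alphabet 'x, finite set of arms 'a (so K = CARD('a)),
 hypotheses indexed by i < m; hypothesis i is nu i :: 'a => 'x pmf.
 A batch outcome is an element of (Delta_X)^K, i.e. a function 'a => 'x pmf.
 A history Q^t is a list of batch outcomes of length t.\<close>

definition KL :: "'x::finite pmf \<Rightarrow> 'x pmf \<Rightarrow> ereal" where
  "KL P Q = (if (\<forall>x. pmf Q x = 0 \<longrightarrow> pmf P x = 0)
             then ereal (\<Sum>x\<in>{x. pmf P x > 0}. pmf P x * ln (pmf P x / pmf Q x))
             else \<infinity>)"

text \<open>Empirical distribution of a sample (uniform by convention for an empty sample;
 such a sample only arises for arms with zero allocation).\<close>
definition empirical :: "'x::finite list \<Rightarrow> 'x pmf" where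
  "empirical xs = (if xs = [] then pmf_of_set UNIV else pmf_of_multiset (mset xs))"

text \<open>Number of pulls of an arm with allocation weight wa in a batch of n = T/B samples.\<close>
definition pulls :: "nat \<Rightarrow> real \<Rightarrow> nat" where
  "pulls n wa = nat \<lceil>wa * real n\<rceil>"

definition valid_alloc ::
  "nat \<Rightarrow> (nat \<Rightarrow> ('a::finite \<Rightarrow> 'x pmf) list \<Rightarrow> 'a \<Rightarrow> real) \<Rightarrow> bool" where
  "valid_alloc B w \<longleftrightarrow> (\<forall>t\<in>{1..B}. \<forall>H. length H = t - 1 \<longrightarrow>
      (\<forall>a. w t H a \<ge> 0) \<and> (\<Sum>a\<in>UNIV. w t H a) = 1)"

definition batch_pmf ::
  "nat \<Rightarrow> ('a::finite \<Rightarrow> real) \<Rightarrow> ('a \<Rightarrow> 'x::finite pmf) \<Rightarrow> ('a \<Rightarrow> 'x pmf) pmf" where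
  "batch_pmf n wt nu =
     Pi_pmf UNIV undefined (\<lambda>a. map_pmf empirical (replicate_pmf (pulls n (wt a)) (nu a)))"

fun history_pmf ::
  "(nat \<Rightarrow> ('a::finite \<Rightarrow> 'x::finite pmf) list \<Rightarrow> 'a \<Rightarrow> real) \<Rightarrow> nat \<Rightarrow>
   ('a \<Rightarrow> 'x pmf) \<Rightarrow> nat \<Rightarrow> ('a \<Rightarrow> 'x pmf) list pmf" where
  "history_pmf w n nu 0 = return_pmf []"
| "history_pmf w n nu (Suc t) =
     bind_pmf (history_pmf w n nu t)
       (\<lambda>H. map_pmf (\<lambda>Qt. H @ [Qt]) (batch_pmf n (w (Suc t) H) nu))"

definition score ::
  "nat \<Rightarrow> (nat \<Rightarrow> ('a::finite \<Rightarrow> 'x::finite pmf) list \<Rightarrow> 'a \<Rightarrow> real) \<Rightarrow>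
   (nat \<Rightarrow> 'a \<Rightarrow> 'x pmf) \<Rightarrow> nat \<Rightarrow> ('a \<Rightarrow> 'x pmf) list \<Rightarrow> ereal" where
  "score B w nu i Q = (\<Sum>t\<in>{1..B}. \<Sum>a\<in>UNIV.
      ereal (w t (take (t - 1) Q) a) * KL ((Q ! (t - 1)) a) (nu i a))"

definition maxlik_rule ::
  "nat \<Rightarrow> nat \<Rightarrow> (nat \<Rightarrow> ('a::finite \<Rightarrow> 'x::finite pmf) list \<Rightarrow> 'a \<Rightarrow> real) \<Rightarrow>
   (nat \<Rightarrow> 'a \<Rightarrow> 'x pmf) \<Rightarrow> (('a \<Rightarrow> 'x pmf) list \<Rightarrow> nat) \<Rightarrow> bool" where
  "maxlik_rule m B w nu dec \<longleftrightarrow> (\<forall>Q. length Q = B \<longrightarrow>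
      dec Q < m \<and> (\<forall>i<m. score B w nu (dec Q) Q \<le> score B w nu i Q))"

definition err_prob ::
  "nat \<Rightarrow> (nat \<Rightarrow> ('a::finite \<Rightarrow> 'x::finite pmf) list \<Rightarrow> 'a \<Rightarrow> real) \<Rightarrow>
   (nat \<Rightarrow> 'a \<Rightarrow> 'x pmf) \<Rightarrow> (('a \<Rightarrow> 'x pmf) list \<Rightarrow> nat) \<Rightarrow> nat \<Rightarrow> nat \<Rightarrow> real" where
  "err_prob B w nu dec j n = measure_pmf.prob (history_pmf w n (nu j) B) {Q. dec Q \<noteq> j}"

definition neglog :: "real \<Rightarrow> ereal" where
  "neglog p = (if p = 0 then \<infinity> else ereal (- ln p))"

text \<open>Error exponent under hypothesis j: liminf_{T\<rightarrow>\<infinity>} -(1/T) log P_j(error), T = B*n.\<close>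
definition err_exponent ::
  "nat \<Rightarrow> (nat \<Rightarrow> ('a::finite \<Rightarrow> 'x::finite pmf) list \<Rightarrow> 'a \<Rightarrow> real) \<Rightarrow>
   (nat \<Rightarrow> 'a \<Rightarrow> 'x pmf) \<Rightarrow> (('a \<Rightarrow> 'x pmf) list \<Rightarrow> nat) \<Rightarrow> nat \<Rightarrow> ereal" where
  "err_exponent B w nu dec j =
     liminf (\<lambda>n. neglog (err_prob B w nu dec j n) / ereal (real (B * n)))"

definition min_err_exponent ::
  "nat \<Rightarrow> nat \<Rightarrow> (nat \<Rightarrow> ('a::finite \<Rightarrow> 'x::finite pmf) list \<Rightarrow> 'a \<Rightarrow> real) \<Rightarrow>
   (nat \<Rightarrow> 'a \<Rightarrow> 'x pmf) \<Rightarrow> (('a \<Rightarrow> 'x pmf) list \<Rightarrow> nat) \<Rightarrow> ereal" where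
  "min_err_exponent m B w nu dec = (INF j\<in>{..<m}. err_exponent B w nu dec j)"

end

theory Submission
  imports Defs "HOL-Real_Asymp.Real_Asymp"
begin

lemma replicate_pmf_Suc_pair:
  "replicate_pmf (Suc n) p = map_pmf (\<lambda>(x,xs). x # xs) (pair_pmf p (replicate_pmf n p))"
  by (simp add: pair_pmf_def map_bind_pmf map_return_pmf)

lemma pmf_replicate_pmf:
  "pmf (replicate_pmf N p) xs = (if length xs = N then prod_list (map (pmf p) xs) else 0)"
proof (induction N arbitrary: xs)
  case 0
  then show ?case by (auto simp: pmf_return)
next
  case (Suc n)
  show ?case
  proof (cases xs)
    case Nil
    have "xs \<notin> set_pmf (replicate_pmf (Suc n) p)" using Nil by (simp add: set_replicate_pmf)
    then show ?thesis using Nil by (simp add: set_pmf_eq)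
  next
    case (Cons y ys)
    have inj: "inj (\<lambda>(x::'a,xs). x # xs)" by (auto simp: inj_def)
    have "pmf (replicate_pmf (Suc n) p) xs = pmf (pair_pmf p (replicate_pmf n p)) (y, ys)"
      unfolding replicate_pmf_Suc_pair Cons
      using pmf_map_inj'[OF inj, of "pair_pmf p (replicate_pmf n p)" "(y,ys)"] by simp
    also have "\<dots> = pmf p y * pmf (replicate_pmf n p) ys" by (simp add: pmf_pair)
    finally show ?thesis using Suc.IH[of ys] Cons by simp
  qed
qed

lemma prod_list_count:
  fixes f :: "'x::finite \<Rightarrow> real"
  shows "prod_list (map f xs) = (\<Prod>x\<in>UNIV. f x ^ count (mset xs) x)"
proof (induction xs)
  case Nil
  then show ?case by simp
next
  case (Cons a xs)
  have "(\<Prod>x\<in>UNIV. f x ^ count (mset (a # xs)) x)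
      = (\<Prod>x\<in>UNIV. f x ^ count (mset xs) x * (if x = a then f x else 1))"
    by (intro prod.cong) auto
  also have "\<dots> = (\<Prod>x\<in>UNIV. f x ^ count (mset xs) x) * (\<Prod>x\<in>UNIV. (if x = a then f x else 1))"
    by (simp add: prod.distrib)
  also have "(\<Prod>x\<in>UNIV. (if x = a then f x else 1)) = f a"
    by (simp add: prod.delta)
  finally show ?case using Cons by simp
qed

lemma pmf_empirical:
  assumes "xs \<noteq> []"
  shows "pmf (empirical xs) x = count (mset xs) x / length xs"
  using assms by (simp add: empirical_def)

lemma KL_finite_iff:
  "KL P p \<noteq> \<infinity> \<longleftrightarrow> (\<forall>x. pmf p x = 0 \<longrightarrow> pmf P x = 0)"
  by (simp add: KL_def)

lemma KL_nonneg: "0 \<le> KL P (p :: 'x::finite pmf)"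
proof (cases "\<forall>x. pmf p x = 0 \<longrightarrow> pmf P x = 0")
  case True
  define S where "S = {x. pmf P x > 0}"
  have "(\<Sum>x\<in>S. pmf P x - pmf p x) \<le> (\<Sum>x\<in>S. pmf P x * ln (pmf P x / pmf p x))"
  proof (rule sum_mono)
    fix x assume "x \<in> S"
    hence P: "pmf P x > 0" by (simp add: S_def)
    hence p: "pmf p x > 0" using True by (metis pmf_nonneg order_le_less)
    have "ln (pmf p x / pmf P x) \<le> pmf p x / pmf P x - 1"
      by (rule ln_le_minus_one) (use P p in auto)
    moreover have "ln (pmf P x / pmf p x) = - ln (pmf p x / pmf P x)"
      using P p by (simp add: ln_div)
    ultimately have "pmf P x * (1 - pmf p x / pmf P x) \<le> pmf P x * ln (pmf P x / pmf p x)"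
      using P by (intro mult_left_mono) auto
    moreover have "pmf P x * (1 - pmf p x / pmf P x) = pmf P x - pmf p x"
      using P by (simp add: field_simps)
    ultimately show "pmf P x - pmf p x \<le> pmf P x * ln (pmf P x / pmf p x)"
      by linarith
  qed
  moreover have "(\<Sum>x\<in>S. pmf P x) = 1"
    by (rule sum_pmf_eq_1) (auto simp: S_def set_pmf_eq')
  moreover have "(\<Sum>x\<in>S. pmf p x) \<le> (\<Sum>x\<in>UNIV. pmf p x)"
    by (rule sum_mono2) auto
  moreover have "(\<Sum>x\<in>UNIV. pmf p x) = 1"
    by (rule sum_pmf_eq_1) auto
  ultimately have "0 \<le> (\<Sum>x\<in>S. pmf P x * ln (pmf P x / pmf p x))"
    by (simp add: sum_subtractf)
  thus ?thesis using True by (simp add: KL_def S_def)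
qed (auto simp: KL_def)

lemma neglog_ge_iff:
  assumes "0 \<le> p" "p \<le> exp (- r)"
  shows "ereal r \<le> neglog p"
proof (cases "p = 0")
  case False
  hence "p > 0" using assms by auto
  have "ln p \<le> - r" using assms \<open>p > 0\<close> by (metis ln_exp ln_le_cancel_iff exp_gt_zero)
  thus ?thesis using False by (simp add: neglog_def)
qed (simp add: neglog_def)

lemma arm_bound:
  fixes p P :: "'x::finite pmf"
  shows "ereal (real N) * KL P p \<le> neglog (pmf (map_pmf empirical (replicate_pmf N p)) P)"
proof (cases "N = 0")
  case True
  have "pmf (map_pmf empirical (replicate_pmf N p)) P \<le> exp (- 0)" by (simp add: pmf_le_1)
  hence "ereal 0 \<le> neglog (pmf (map_pmf empirical (replicate_pmf N p)) P)"
    by (intro neglog_ge_iff) auto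
  moreover have "ereal (real N) * KL P p = 0" using True by (simp add: zero_ereal_def[symmetric])
  ultimately show ?thesis by (simp add: zero_ereal_def)
next
  case False
  define R where "R = replicate_pmf N p"
  define A where "A = {xs :: 'x list. length xs = N \<and> empirical xs = P}"
  have finA: "finite A" unfolding A_def
    using finite_lists_length_eq[of "UNIV :: 'x set" N] by (rule finite_subset[rotated]) auto
  have "pmf (map_pmf empirical R) P = measure R (empirical -` {P})" by (simp add: pmf_map)
  also have "\<dots> = measure R (empirical -` {P} \<inter> set_pmf R)" by (simp add: measure_Int_set_pmf)
  also have "\<dots> \<le> measure R A"
    by (intro measure_pmf.finite_measure_mono) (auto simp: A_def R_def set_replicate_pmf)
  also have "\<dots> = (\<Sum>xs\<in>A. pmf R xs)" using finA by (simp add: measure_measure_pmf_finite)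
  finally have le1: "pmf (map_pmf empirical R) P \<le> (\<Sum>xs\<in>A. pmf R xs)" .
  have cnt: "real (count (mset xs) x) = real N * pmf P x" if "xs \<in> A" for xs x
    using that False by (auto simp: A_def pmf_empirical)
  show ?thesis
  proof (cases "\<forall>x. pmf p x = 0 \<longrightarrow> pmf P x = 0")
    case False
    then obtain x0 where x0: "pmf p x0 = 0" "pmf P x0 \<noteq> 0" by auto
    have "pmf R xs = 0" if "xs \<in> A" for xs
    proof -
      have "real (count (mset xs) x0) \<noteq> 0" using cnt[OF that, of x0] x0 \<open>N \<noteq> 0\<close> by simp
      hence "count (mset xs) x0 \<noteq> 0" by (metis of_nat_0)
      hence "pmf p x0 ^ count (mset xs) x0 = 0" using x0 by simp
      hence "(\<Prod>x\<in>UNIV. pmf p x ^ count (mset xs) x) = 0"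
        by (intro prod_zero) auto
      thus ?thesis using that by (simp add: R_def pmf_replicate_pmf prod_list_count A_def)
    qed
    hence "pmf (map_pmf empirical R) P \<le> 0" using le1 by simp
    hence "pmf (map_pmf empirical R) P = 0" by (simp add: order_antisym)
    thus ?thesis by (simp add: neglog_def R_def)
  next
    case True
    define D where "D = (\<Sum>x\<in>{x. pmf P x > 0}. pmf P x * ln (pmf P x / pmf p x))"
    have KLD: "KL P p = ereal D" using True by (simp add: KL_def D_def)
    define RP where "RP = replicate_pmf N P"
    have eq: "pmf R xs = exp (- (real N * D)) * pmf RP xs" if "xs \<in> A" for xs
    proof -
      define g where "g x = (if pmf P x > 0 then real (count (mset xs) x) * ln (pmf p x / pmf P x) else 0)" for x
      have fac: "pmf p x ^ count (mset xs) x = pmf P x ^ count (mset xs) x * exp (g x)" for x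
      proof (cases "pmf P x > 0")
        case True
        hence pp: "pmf p x > 0" using \<open>\<forall>x. pmf p x = 0 \<longrightarrow> pmf P x = 0\<close>
          by (metis order_le_less pmf_nonneg less_irrefl)
        have "exp (g x) = (pmf p x / pmf P x) ^ count (mset xs) x"
          using True pp by (simp add: g_def exp_of_nat_mult)
        thus ?thesis using True by (simp add: power_divide)
      next
        case False
        hence "pmf P x = 0" by (metis order_le_less pmf_nonneg)
        hence c0: "count (mset xs) x = 0" using cnt[OF that, of x] by simp
        show ?thesis unfolding g_def c0 using False by simp
      qed
      have sg: "(\<Sum>x\<in>UNIV. g x) = - (real N * D)"
      proof -
        have "(\<Sum>x\<in>UNIV. g x) = (\<Sum>x\<in>{x. pmf P x > 0}. g x)"
          by (rule sum.mono_neutral_right) (auto simp: g_def)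
        also have "\<dots> = (\<Sum>x\<in>{x. pmf P x > 0}. - (real N * (pmf P x * ln (pmf P x / pmf p x))))"
        proof (rule sum.cong)
          fix x assume "x \<in> {x. pmf P x > 0}"
          hence P: "pmf P x > 0" by simp
          hence pp: "pmf p x > 0" using \<open>\<forall>x. pmf p x = 0 \<longrightarrow> pmf P x = 0\<close>
            by (metis order_le_less pmf_nonneg less_irrefl)
          show "g x = - (real N * (pmf P x * ln (pmf P x / pmf p x)))"
            using P pp cnt[OF that, of x] by (simp add: g_def ln_div algebra_simps)
        qed simp
        also have "\<dots> = - (real N * D)" by (simp add: D_def sum_negf sum_distrib_left)
        finally show ?thesis .
      qed
      have "pmf R xs = (\<Prod>x\<in>UNIV. pmf p x ^ count (mset xs) x)"
        using that by (simp add: R_def pmf_replicate_pmf prod_list_count A_def)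
      also have "\<dots> = (\<Prod>x\<in>UNIV. pmf P x ^ count (mset xs) x) * exp (\<Sum>x\<in>UNIV. g x)"
        by (simp add: fac prod.distrib exp_sum)
      also have "(\<Prod>x\<in>UNIV. pmf P x ^ count (mset xs) x) = pmf RP xs"
        using that by (simp add: RP_def pmf_replicate_pmf prod_list_count A_def)
      finally show ?thesis using sg by simp
    qed
    have "(\<Sum>xs\<in>A. pmf R xs) = exp (- (real N * D)) * (\<Sum>xs\<in>A. pmf RP xs)"
      by (simp add: eq sum_distrib_left)
    also have "(\<Sum>xs\<in>A. pmf RP xs) = measure RP A" using finA by (simp add: measure_measure_pmf_finite)
    also have "\<dots> \<le> 1" by simp
    finally have "pmf (map_pmf empirical R) P \<le> exp (- (real N * D))"
      using le1 by (smt (verit) exp_gt_zero mult_left_mono mult_cancel_left1)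
    hence "ereal (real N * D) \<le> neglog (pmf (map_pmf empirical R) P)"
      by (intro neglog_ge_iff) auto
    thus ?thesis by (simp add: KLD R_def)
  qed
qed

lemma neglog_mult:
  assumes "0 \<le> a" "0 \<le> b"
  shows "neglog (a * b) = neglog a + neglog b"
  using assms by (auto simp: neglog_def ln_mult)

lemma neglog_prod:
  assumes "\<And>x. x \<in> A \<Longrightarrow> 0 \<le> f x"
  shows "neglog (\<Prod>x\<in>A. f x) = (\<Sum>x\<in>A. neglog (f x))"
  using assms
proof (induction A rule: infinite_finite_induct)
  case (infinite A)
  then show ?case by (simp add: neglog_def)
next
  case empty
  then show ?case by (simp add: neglog_def zero_ereal_def)
next
  case (insert x F)
  then show ?case by (simp add: neglog_mult prod_nonneg)
qed

lemma pmf_batch: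
  "pmf (batch_pmf n wt nu) Qt = (\<Prod>a\<in>UNIV. pmf (map_pmf empirical (replicate_pmf (pulls n (wt a)) (nu a))) (Qt a))"
  by (simp add: batch_pmf_def pmf_Pi)

lemma batch_bound:
  fixes nu :: "'a::finite \<Rightarrow> 'x::finite pmf"
  assumes "\<And>a. 0 \<le> wt a"
  shows "ereal (real n) * (\<Sum>a\<in>UNIV. ereal (wt a) * KL (Qt a) (nu a)) \<le> neglog (pmf (batch_pmf n wt nu) Qt)"
proof -
  have "ereal (real n) * (\<Sum>a\<in>UNIV. ereal (wt a) * KL (Qt a) (nu a))
      = (\<Sum>a\<in>UNIV. ereal (real n) * (ereal (wt a) * KL (Qt a) (nu a)))"
    by (rule sum_ereal_right_distrib) (use assms KL_nonneg in \<open>auto simp: ereal_zero_le_0_iff\<close>)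
  also have "\<dots> \<le> (\<Sum>a\<in>UNIV. neglog (pmf (map_pmf empirical (replicate_pmf (pulls n (wt a)) (nu a))) (Qt a)))"
  proof (rule sum_mono)
    fix a
    have "real n * wt a \<le> real (pulls n (wt a))"
      unfolding pulls_def by (simp add: mult.commute) linarith
    hence "ereal (real n * wt a) * KL (Qt a) (nu a) \<le> ereal (real (pulls n (wt a))) * KL (Qt a) (nu a)"
      by (intro ereal_mult_right_mono KL_nonneg) auto
    also have "\<dots> \<le> neglog (pmf (map_pmf empirical (replicate_pmf (pulls n (wt a)) (nu a))) (Qt a))"
      by (rule arm_bound)
    finally show "ereal (real n) * (ereal (wt a) * KL (Qt a) (nu a)) \<le> \<dots>"
      by (simp add: mult.assoc[symmetric])
  qed
  also have "\<dots> = neglog (pmf (batch_pmf n wt nu) Qt)"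
    by (simp add: pmf_batch neglog_prod)
  finally show ?thesis .
qed

lemma pmf_history_Suc:
  "pmf (history_pmf w n nu (Suc t)) (H @ [q]) = pmf (history_pmf w n nu t) H * pmf (batch_pmf n (w (Suc t) H) nu) q"
proof -
  have inj: "inj (\<lambda>Qt. H @ [Qt])" by (auto simp: inj_def)
  have "pmf (map_pmf (\<lambda>Qt. H' @ [Qt]) (batch_pmf n (w (Suc t) H') nu)) (H @ [q])
        = indicator {H} H' * pmf (batch_pmf n (w (Suc t) H) nu) q" for H'
  proof (cases "H' = H")
    case True
    then show ?thesis using pmf_map_inj'[OF inj] by simp
  next
    case False
    then show ?thesis by (subst pmf_map_outside) auto
  qed
  hence "pmf (history_pmf w n nu (Suc t)) (H @ [q])
      = (\<integral>H'. indicator {H} H' * pmf (batch_pmf n (w (Suc t) H) nu) q \<partial>measure_pmf (history_pmf w n nu t))"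
    by (simp add: pmf_bind)
  also have "\<dots> = pmf (history_pmf w n nu t) H * pmf (batch_pmf n (w (Suc t) H) nu) q"
    by (simp add: measure_pmf_single)
  finally show ?thesis .
qed

definition psc :: "(nat \<Rightarrow> ('a::finite \<Rightarrow> 'x::finite pmf) list \<Rightarrow> 'a \<Rightarrow> real) \<Rightarrow> ('a \<Rightarrow> 'x pmf) \<Rightarrow> nat \<Rightarrow> ('a \<Rightarrow> 'x pmf) list \<Rightarrow> ereal" where
  "psc w nu t H = (\<Sum>s\<in>{1..t}. \<Sum>a\<in>UNIV. ereal (w s (take (s - 1) H) a) * KL ((H ! (s - 1)) a) (nu a))"

lemma psc_Suc:
  assumes "length H = t"
  shows "psc w nu (Suc t) (H @ [q]) = psc w nu t H + (\<Sum>a\<in>UNIV. ereal (w (Suc t) H a) * KL (q a) (nu a))"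
proof -
  have "psc w nu (Suc t) (H @ [q]) = (\<Sum>s\<in>{1..t}. \<Sum>a\<in>UNIV. ereal (w s (take (s - 1) (H @ [q])) a) * KL (((H @ [q]) ! (s - 1)) a) (nu a))
        + (\<Sum>a\<in>UNIV. ereal (w (Suc t) H a) * KL (q a) (nu a))"
    unfolding psc_def using assms by (simp add: sum.cl_ivl_Suc nth_append)
  also have "(\<Sum>s\<in>{1..t}. \<Sum>a\<in>UNIV. ereal (w s (take (s - 1) (H @ [q])) a) * KL (((H @ [q]) ! (s - 1)) a) (nu a))
      = psc w nu t H"
    unfolding psc_def using assms by (intro sum.cong refl) (auto simp: nth_append)
  finally show ?thesis .
qed

lemma psc_nonneg:
  assumes "\<And>s a. s \<in> {1..t} \<Longrightarrow> 0 \<le> w s (take (s - 1) H) a"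
  shows "0 \<le> psc w nu t H"
  unfolding psc_def using assms KL_nonneg
  by (intro sum_nonneg) (auto simp: ereal_zero_le_0_iff)

lemma history_bound:
  assumes hw: "\<And>s H a. 1 \<le> s \<Longrightarrow> s \<le> B \<Longrightarrow> length H = s - 1 \<Longrightarrow> 0 \<le> w s H a"
  shows "t \<le> B \<Longrightarrow> length H = t \<Longrightarrow> ereal (real n) * psc w nu t H \<le> neglog (pmf (history_pmf w n nu t) H)"
proof (induction t arbitrary: H)
  case 0
  then show ?case by (simp add: psc_def neglog_def zero_ereal_def)
next
  case (Suc t)
  then obtain H0 q where H: "H = H0 @ [q]" and len: "length H0 = t"
    by (metis length_Suc_conv_rev)
  have nn1: "0 \<le> psc w nu t H0"
    by (rule psc_nonneg) (use Suc.prems len in \<open>auto intro!: hw\<close>)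
  have wn: "0 \<le> w (Suc t) H0 a" for a using Suc.prems len by (intro hw) auto
  have nn2: "0 \<le> (\<Sum>a\<in>UNIV. ereal (w (Suc t) H0 a) * KL (q a) (nu a))"
    using wn KL_nonneg by (intro sum_nonneg) (auto simp: ereal_zero_le_0_iff)
  have "ereal (real n) * psc w nu (Suc t) H
      = ereal (real n) * psc w nu t H0 + ereal (real n) * (\<Sum>a\<in>UNIV. ereal (w (Suc t) H0 a) * KL (q a) (nu a))"
    unfolding H psc_Suc[OF len] by (rule ereal_right_distrib[OF nn1 nn2])
  also have "\<dots> \<le> neglog (pmf (history_pmf w n nu t) H0) + neglog (pmf (batch_pmf n (w (Suc t) H0) nu) q)"
    by (intro add_mono Suc.IH batch_bound wn) (use Suc.prems len in auto)
  also have "\<dots> = neglog (pmf (history_pmf w n nu (Suc t)) H)"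
    unfolding H pmf_history_Suc by (simp add: neglog_mult)
  finally show ?case .
qed

lemma psc_score: "psc w (nu j) B H = score B w nu j H"
  by (simp add: psc_def score_def)

lemma PiE_dflt_UNIV: "PiE_dflt UNIV d B = {f. \<forall>x. f x \<in> B x}"
  by (simp add: PiE_dflt_def)

lemma card_PiE_dflt_UNIV:
  assumes "finite (S :: 'b set)"
  shows "card {f :: 'a::finite \<Rightarrow> 'b. \<forall>x. f x \<in> S} = card S ^ CARD('a)"
  using card_PiE_dflt[of "UNIV :: 'a set" "\<lambda>_. S" undefined] assms
  by (simp add: PiE_dflt_UNIV)

definition EmpN :: "nat \<Rightarrow> 'x::finite pmf set" where
  "EmpN N = empirical ` {xs. length xs = N}"

lemma finite_EmpN: "finite (EmpN N :: 'x::finite pmf set)"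
  unfolding EmpN_def
  using finite_lists_length_eq[of "UNIV :: 'x set" N] by simp

lemma card_EmpN: "card (EmpN N :: 'x::finite pmf set) \<le> (N + 1) ^ CARD('x)"
proof -
  define g :: "'x pmf \<Rightarrow> 'x \<Rightarrow> nat" where "g P = (\<lambda>x. nat \<lfloor>pmf P x * real N\<rfloor>)" for P
  have pe: "pmf (empirical xs) x * real N = real (count (mset xs) x)" if "length xs = N" "N > 0" for xs :: "'x list" and x
  proof -
    have "xs \<noteq> []" using that by auto
    thus ?thesis using that by (simp add: pmf_empirical)
  qed
  have "inj_on g (EmpN N)"
  proof (rule inj_onI)
    fix P1 P2 assume P1: "P1 \<in> EmpN N" and P2: "P2 \<in> EmpN N" and eq: "g P1 = g P2"
    from P1 obtain xs1 where xs1: "length xs1 = N" "P1 = empirical xs1" by (auto simp: EmpN_def)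
    from P2 obtain xs2 where xs2: "length xs2 = N" "P2 = empirical xs2" by (auto simp: EmpN_def)
    show "P1 = P2"
    proof (cases "N = 0")
      case True
      then show ?thesis using xs1 xs2 by simp
    next
      case False
      show ?thesis
      proof (rule pmf_eqI)
        fix x
        have "g P1 x = g P2 x" using eq by simp
        hence "count (mset xs1) x = count (mset xs2) x"
          using pe[OF xs1(1), of x] pe[OF xs2(1), of x] False xs1(2) xs2(2) by (simp add: g_def)
        moreover have "xs1 \<noteq> []" "xs2 \<noteq> []" using xs1 xs2 False by auto
        ultimately show "pmf P1 x = pmf P2 x" using xs1 xs2 by (simp add: pmf_empirical)
      qed
    qed
  qed
  moreover have sub: "g ` EmpN N \<subseteq> {f. \<forall>x. f x \<in> {0..N}}"
  proof clarify
    fix P :: "'x pmf" and x :: 'x assume "P \<in> EmpN N"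
    then obtain xs where xs: "length xs = N" "P = empirical xs" by (auto simp: EmpN_def)
    show "g P x \<in> {0..N}"
    proof (cases "N = 0")
      case True then show ?thesis by (simp add: g_def)
    next
      case False
      have "count (mset xs) x \<le> N" using xs(1) by (metis count_le_size size_mset)
      then show ?thesis using pe[OF xs(1), of x] False xs(2) by (simp add: g_def)
    qed
  qed
  have "card (g ` EmpN N) \<le> card {f :: 'x \<Rightarrow> nat. \<forall>x. f x \<in> {0..N}}"
  proof (rule card_mono[OF _ sub])
    show "finite {f :: 'x \<Rightarrow> nat. \<forall>x. f x \<in> {0..N}}"
      using finite_PiE_dflt[of "UNIV :: 'x set" "\<lambda>_. {0..N}" undefined] by (simp add: PiE_dflt_UNIV)
  qed
  ultimately have "card (EmpN N :: 'x pmf set) \<le> card {f :: 'x \<Rightarrow> nat. \<forall>x. f x \<in> {0..N}}"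
    using card_image[of g "EmpN N"] by simp
  also have "\<dots> = (N + 1) ^ CARD('x)" by (rule trans[OF card_PiE_dflt_UNIV]) simp_all
  finally show ?thesis .
qed

definition Emp :: "nat \<Rightarrow> 'x::finite pmf set" where
  "Emp n = (\<Union>N\<in>{0..n}. EmpN N)"

lemma finite_Emp: "finite (Emp n)"
  unfolding Emp_def using finite_EmpN by auto

lemma card_Emp: "card (Emp n :: 'x::finite pmf set) \<le> (n + 1) ^ (CARD('x) + 1)"
proof -
  have "card (Emp n :: 'x pmf set) \<le> (\<Sum>N\<in>{0..n}. card (EmpN N :: 'x pmf set))"
    unfolding Emp_def by (rule card_UN_le) simp
  also have "\<dots> \<le> (\<Sum>N\<in>{0..n}. (n + 1) ^ CARD('x))"
    by (intro sum_mono order.trans[OF card_EmpN] power_mono) auto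
  also have "\<dots> = (n + 1) ^ (CARD('x) + 1)" by simp
  finally show ?thesis .
qed

definition Hist :: "nat \<Rightarrow> nat \<Rightarrow> ('a::finite \<Rightarrow> 'x::finite pmf) list set" where
  "Hist n t = {H. set H \<subseteq> {f. \<forall>a. f a \<in> Emp n} \<and> length H = t}"

lemma finite_F: "finite {f :: 'a::finite \<Rightarrow> 'x::finite pmf. \<forall>a. f a \<in> Emp n}"
proof -
  have "finite (Emp n :: 'x pmf set)" by (rule finite_Emp)
  thus ?thesis using finite_PiE_dflt[of "UNIV :: 'a set" "\<lambda>_. Emp n :: 'x pmf set" undefined]
    by (simp add: PiE_dflt_UNIV)
qed

lemma finite_Hist: "finite (Hist n t :: ('a::finite \<Rightarrow> 'x::finite pmf) list set)"
proof -
  note finite_F[of n]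
  thus ?thesis unfolding Hist_def by (rule finite_lists_length_eq)
qed

lemma card_Hist: "card (Hist n t :: ('a::finite \<Rightarrow> 'x::finite pmf) list set)
   \<le> (n + 1) ^ ((CARD('x) + 1) * CARD('a) * t)"
proof -
  have "card (Hist n t :: ('a \<Rightarrow> 'x pmf) list set) = (card (Emp n :: 'x pmf set) ^ CARD('a)) ^ t"
    unfolding Hist_def
    by (subst card_lists_length_eq) (auto simp: finite_F card_PiE_dflt_UNIV finite_Emp)
  also have "\<dots> \<le> (((n + 1) ^ (CARD('x) + 1)) ^ CARD('a)) ^ t"
    by (intro power_mono card_Emp) auto
  also have "\<dots> = (n + 1) ^ ((CARD('x) + 1) * CARD('a) * t)"
    by (metis power_mult)
  finally show ?thesis .
qed

lemma pulls_le:
  assumes "0 \<le> wa" "wa \<le> 1"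
  shows "pulls n wa \<le> n"
proof -
  have h: "wa * real n \<le> real n" using assms by (simp add: mult_left_le_one_le)
  thus ?thesis unfolding pulls_def using h by simp
qed

lemma valid_alloc_D:
  assumes "valid_alloc B w" "1 \<le> s" "s \<le> B" "length H = s - 1"
  shows "0 \<le> w s H a" "w s H a \<le> 1"
proof -
  have h: "(\<forall>a. w s H a \<ge> 0) \<and> (\<Sum>a\<in>UNIV. w s H a) = 1"
    using assms unfolding valid_alloc_def by auto
  thus "0 \<le> w s H a" by auto
  have "w s H a \<le> (\<Sum>a\<in>UNIV. w s H a)"
    by (rule member_le_sum) (use h in auto)
  thus "w s H a \<le> 1" using h by simp
qed

lemma history_support:
  fixes nu :: "'a::finite \<Rightarrow> 'x::finite pmf"
  assumes va: "valid_alloc B w"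
  shows "t \<le> B \<Longrightarrow> set_pmf (history_pmf w n nu t) \<subseteq> Hist n t"
proof (induction t)
  case 0
  then show ?case by (simp add: Hist_def)
next
  case (Suc t)
  show ?case
  proof
    fix H' assume "H' \<in> set_pmf (history_pmf w n nu (Suc t))"
    then obtain H Qt where H: "H \<in> set_pmf (history_pmf w n nu t)"
      and Qt: "Qt \<in> set_pmf (batch_pmf n (w (Suc t) H) nu)" and H': "H' = H @ [Qt]"
      by auto
    have HH: "H \<in> Hist n t" using H Suc by auto
    hence len: "length H = t" by (simp add: Hist_def)
    have "Qt a \<in> Emp n" for a
    proof -
      have "Qt a \<in> set_pmf (map_pmf empirical (replicate_pmf (pulls n (w (Suc t) H a)) (nu a)))"
        using Qt by (auto simp: batch_pmf_def set_Pi_pmf PiE_dflt_def)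
      then obtain xs where xs: "length xs = pulls n (w (Suc t) H a)" "Qt a = empirical xs"
        by (auto simp: set_replicate_pmf)
      have "pulls n (w (Suc t) H a) \<le> n"
        by (rule pulls_le; rule valid_alloc_D[OF va]) (use Suc.prems len in auto)
      thus ?thesis using xs unfolding Emp_def EmpN_def by auto
    qed
    thus "H' \<in> Hist n (Suc t)" using HH H' by (auto simp: Hist_def)
  qed
qed

lemma neglog_le:
  assumes "0 \<le> p" "ereal r \<le> neglog p"
  shows "p \<le> exp (- r)"
proof (cases "p = 0")
  case False
  hence "r \<le> - ln p" using assms by (simp add: neglog_def)
  hence "ln p \<le> - r" by simp
  thus ?thesis using False assms(1) by (metis exp_le_cancel_iff exp_ln order_le_less)
qed simp

lemma ereal_div_ge:
  fixes x :: ereal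
  assumes "ereal R \<le> x / ereal (real B)" "B > 0"
  shows "ereal (real B * R) \<le> x"
  using assms by (cases x) (auto simp: field_simps)

lemma err_score:
  fixes nu :: "nat \<Rightarrow> 'a::finite \<Rightarrow> 'x::finite pmf"
  assumes "B > 0" "maxlik_rule m B w nu dec"
    and A4: "\<forall>Q. length Q = B \<longrightarrow>
           (SUP j\<in>{..<m}. INF i\<in>{..<m} - {j}. score B w nu i Q / ereal (real B)) \<ge> ereal R"
    and Q: "length Q = B" "dec Q \<noteq> j" "j < m"
  shows "ereal (real B * R) \<le> score B w nu j Q"
proof -
  let ?f = "\<lambda>j. INF i\<in>{..<m} - {j}. score B w nu i Q / ereal (real B)"
  have ne: "?f ` {..<m} \<noteq> {}" using Q by auto
  have eqM: "(SUP j\<in>{..<m}. ?f j) = Max (?f ` {..<m})"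
    by (rule cSup_eq_Max) (use ne in simp_all)
  have "Max (?f ` {..<m}) \<in> ?f ` {..<m}" by (rule Max_in) (use ne in simp_all)
  then obtain j' where j'm: "j' < m" and jeq: "Max (?f ` {..<m}) = ?f j'" by auto
  have "ereal R \<le> (SUP j\<in>{..<m}. ?f j)" using A4[rule_format, OF Q(1)] .
  hence "ereal R \<le> ?f j'" using eqM jeq by simp
  note j' = j'm this
  have low: "ereal (real B * R) \<le> score B w nu i Q" if "i < m" "i \<noteq> j'" for i
  proof -
    have "?f j' \<le> score B w nu i Q / ereal (real B)"
      by (rule INF_lower) (use that in simp)
    hence "ereal R \<le> score B w nu i Q / ereal (real B)"
      using j'(2) by (rule order.trans[rotated])
    thus ?thesis using assms(1) by (rule ereal_div_ge)
  qed
  have k: "dec Q < m" "\<forall>i<m. score B w nu (dec Q) Q \<le> score B w nu i Q"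
    using assms(2) Q unfolding maxlik_rule_def by auto
  show ?thesis
  proof (cases "j' = dec Q")
    case True
    then show ?thesis using low[of j] Q by auto
  next
    case False
    hence "ereal (real B * R) \<le> score B w nu (dec Q) Q" using low[of "dec Q"] k by auto
    also have "\<dots> \<le> score B w nu j Q" using k Q by auto
    finally show ?thesis .
  qed
qed

lemma err_bound:
  fixes nu :: "nat \<Rightarrow> 'a::finite \<Rightarrow> 'x::finite pmf"
  assumes "B > 0" "valid_alloc B w" "maxlik_rule m B w nu dec"
    and A4: "\<forall>Q. length Q = B \<longrightarrow>
           (SUP j\<in>{..<m}. INF i\<in>{..<m} - {j}. score B w nu i Q / ereal (real B)) \<ge> ereal R"
    and j: "j < m"
  shows "err_prob B w nu dec j n \<le> real ((n + 1) ^ ((CARD('x) + 1) * CARD('a) * B)) * exp (- (real n * (real B * R)))"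
proof -
  let ?M = "history_pmf w n (nu j) B"
  let ?S = "Hist n B \<inter> {Q. dec Q \<noteq> j} :: ('a \<Rightarrow> 'x pmf) list set"
  have fin: "finite ?S" using finite_Hist by auto
  have hw: "\<And>s H a. 1 \<le> s \<Longrightarrow> s \<le> B \<Longrightarrow> length H = s - 1 \<Longrightarrow> 0 \<le> w s H a"
    using valid_alloc_D(1)[OF assms(2)] by blast
  have "err_prob B w nu dec j n = measure ?M {Q. dec Q \<noteq> j}" by (simp add: err_prob_def)
  also have "\<dots> = measure ?M ({Q. dec Q \<noteq> j} \<inter> set_pmf ?M)" by (simp add: measure_Int_set_pmf)
  also have "\<dots> \<le> measure ?M ?S"
    using history_support[OF assms(2), of B n "nu j"]
    by (intro measure_pmf.finite_measure_mono) auto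
  also have "\<dots> = (\<Sum>Q\<in>?S. pmf ?M Q)" using fin by (simp add: measure_measure_pmf_finite)
  also have "\<dots> \<le> (\<Sum>Q\<in>?S. exp (- (real n * (real B * R))))"
  proof (rule sum_mono)
    fix Q assume QS: "Q \<in> ?S"
    hence len: "length Q = B" and dq: "dec Q \<noteq> j" by (auto simp: Hist_def)
    have sc: "ereal (real B * R) \<le> score B w nu j Q"
      by (rule err_score[OF assms(1,3) A4 len dq j])
    have "ereal (real n) * ereal (real B * R) \<le> ereal (real n) * score B w nu j Q"
      by (rule ereal_mult_left_mono[OF sc]) simp
    also have "\<dots> = ereal (real n) * psc w (nu j) B Q" by (simp add: psc_score)
    also have "\<dots> \<le> neglog (pmf ?M Q)"
      by (rule history_bound[OF hw]) (use len in auto)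
    finally have "ereal (real n * (real B * R)) \<le> neglog (pmf ?M Q)" by simp
    thus "pmf ?M Q \<le> exp (- (real n * (real B * R)))" by (intro neglog_le) auto
  qed
  also have "\<dots> = real (card ?S) * exp (- (real n * (real B * R)))" by simp
  also have "\<dots> \<le> real (card (Hist n B :: ('a \<Rightarrow> 'x pmf) list set)) * exp (- (real n * (real B * R)))"
  proof (rule mult_right_mono)
    have "card ?S \<le> card (Hist n B :: ('a \<Rightarrow> 'x pmf) list set)"
      by (rule card_mono[OF finite_Hist]) blast
    thus "real (card ?S) \<le> real (card (Hist n B :: ('a \<Rightarrow> 'x pmf) list set))" by (rule of_nat_mono)
  qed simp
  also have "\<dots> \<le> real ((n + 1) ^ ((CARD('x) + 1) * CARD('a) * B)) * exp (- (real n * (real B * R)))"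
  proof (rule mult_right_mono)
    show "real (card (Hist n B :: ('a \<Rightarrow> 'x pmf) list set)) \<le> real ((n + 1) ^ ((CARD('x) + 1) * CARD('a) * B))"
      by (rule of_nat_mono) (rule card_Hist)
  qed simp
  finally show ?thesis .
qed

lemma liminf_bound:
  fixes e :: "nat \<Rightarrow> real" and d B :: nat and R :: real
  assumes B: "B > 0" and e0: "\<And>n. 0 \<le> e n"
    and eb: "\<And>n. e n \<le> real ((n + 1) ^ d) * exp (- (real n * (real B * R)))"
  shows "ereal R \<le> liminf (\<lambda>n. neglog (e n) / ereal (real (B * n)))"
proof -
  define g where "g n = R - real d * ln (real n + 1) / (real B * real n)" for n
  have l0: "(\<lambda>n. ln (real n + 1) / real n) \<longlonglongrightarrow> 0" by real_asymp
  have geq: "g = (\<lambda>n. R - (real d / real B) * (ln (real n + 1) / real n))"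
    by (auto simp: g_def fun_eq_iff)
  have "g \<longlonglongrightarrow> R - (real d / real B) * 0"
    unfolding geq by (intro tendsto_intros l0)
  hence lim: "(\<lambda>n. ereal (g n)) \<longlonglongrightarrow> ereal R" by (intro tendsto_ereal) simp
  have ev: "eventually (\<lambda>n. ereal (g n) \<le> neglog (e n) / ereal (real (B * n))) sequentially"
    using eventually_ge_at_top[of 1]
  proof eventually_elim
    case (elim n)
    have Bn: "real B * real n > 0" using B elim by simp
    show ?case
    proof (cases "e n = 0")
      case True
      then show ?thesis using Bn by (simp add: neglog_def)
    next
      case False
      hence pos: "e n > 0" using e0[of n] by simp
      have "ln (e n) \<le> ln (real ((n + 1) ^ d) * exp (- (real n * (real B * R))))"
        using eb[of n] pos by (subst ln_le_cancel_iff) auto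
      also have "\<dots> = real d * ln (real n + 1) - real n * (real B * R)"
        by (simp add: ln_mult ln_realpow add.commute)
      finally have le: "ln (e n) \<le> real d * ln (real n + 1) - real n * (real B * R)" .
      have gle: "g n \<le> - ln (e n) / (real B * real n)"
      proof -
        have "g n * (real B * real n) = R * (real B * real n) - real d * ln (real n + 1)"
          using Bn B elim by (simp add: g_def field_simps)
        also have "\<dots> \<le> - ln (e n)" using le by (simp add: algebra_simps)
        finally have "g n * (real B * real n) \<le> - ln (e n)" .
        thus ?thesis using Bn by (subst pos_le_divide_eq) auto
      qed
      have eq: "neglog (e n) / ereal (real (B * n)) = ereal (- ln (e n) / (real B * real n))"
        using False Bn B elim by (simp add: neglog_def)
      show ?thesis unfolding eq using gle by (simp only: ereal_less_eq)
    qed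
  qed
  have "ereal R = liminf (\<lambda>n. ereal (g n))"
    by (rule sym, rule lim_imp_Liminf) (simp, rule lim)
  also have "\<dots> \<le> liminf (\<lambda>n. neglog (e n) / ereal (real (B * n)))"
    by (rule Liminf_mono[OF ev])
  finally show ?thesis .
qed

theorem mainTheorem12:
  fixes m B :: nat
    and nu :: "nat \<Rightarrow> 'a::finite \<Rightarrow> 'x::finite pmf"
    and w :: "nat \<Rightarrow> ('a \<Rightarrow> 'x pmf) list \<Rightarrow> 'a \<Rightarrow> real"
    and dec :: "('a \<Rightarrow> 'x pmf) list \<Rightarrow> nat"
    and R :: real
  assumes "B > 0"
    and "valid_alloc B w"
    and "maxlik_rule m B w nu dec"
    and "\<forall>Q. length Q = B \<longrightarrow>
           (SUP j\<in>{..<m}. INF i\<in>{..<m} - {j}. score B w nu i Q / ereal (real B)) \<ge> ereal R"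
  shows "min_err_exponent m B w nu dec \<ge> ereal R"
  unfolding min_err_exponent_def
proof (rule INF_greatest)
  fix j assume "j \<in> {..<m}"
  hence j: "j < m" by simp
  show "ereal R \<le> err_exponent B w nu dec j"
    unfolding err_exponent_def
  proof (rule liminf_bound[OF assms(1), where e = "\<lambda>n. err_prob B w nu dec j n"
         and d = "(CARD('x) + 1) * CARD('a) * B"])
    fix n show "0 \<le> err_prob B w nu dec j n" by (simp add: err_prob_def)
    show "err_prob B w nu dec j n \<le> real ((n + 1) ^ ((CARD('x) + 1) * CARD('a) * B)) * exp (- (real n * (real B * R)))"
      by (rule err_bound[OF assms j])
  qed
qed

end
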